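(* Let $A\in\mathbb{R}^{m\times n}$ and $x\in\mathbb{R}^n$. Let $L\subseteq\mathrm{supp}(x)$ and $S\subseteq[n]\setminus L$. If there is no circuit $C\subseteq\mathrm{supp}(x)$ with $C\cap S\ne\emptyset$, then \[\|x_S\|_\infty\le\kappa_A\min_{z\in\ker(A)+x}\|z_{[n]\setminus\operatorname{cl}(L)}\|_1.\]
   Context: An elementary vector of $\ker(A)$ is a nonzero $g\in\ker(A)$ with inclusion-minimal support among nonzero vectors of $\ker(A)$; a circuit is the support of an elementary vector (equivalently, a circuit of the linear matroid of the columns of $A$). The circuit imbalance is $\kappa_A=\max\{|g_i|/|g_j|: g \text{ elementary},\ i,j\in\mathrm{supp}(g)\}$. For $S\subseteq[n]$, $\operatorname{rk}(S)=\operatorname{rk}(A_S)$ where $A_S$ is the column submatrix, and $\operatorname{cl}(S)=\{i\in[n]:\operatorname{rk}(S\cup\{i\})=\operatorname{rk}(S)\}$. $x_S$ is the restriction of $x$ to coordinates in $S$. *)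

theory Defs
  imports "HOL-Analysis.Analysis"
begin

text \<open>A real m x n matrix is \<open>A :: real^'n^'m\<close>; the column index set [n] is \<open>UNIV :: 'n set\<close>.\<close>

definition supp :: "real^'n \<Rightarrow> 'n set" where
  "supp g = {i. g $ i \<noteq> 0}"

definition kerA :: "real^'n^'m \<Rightarrow> (real^'n) set" where
  "kerA A = {g. A *v g = 0}"

definition elementary :: "real^'n^'m \<Rightarrow> real^'n \<Rightarrow> bool" where
  "elementary A g \<longleftrightarrow> g \<in> kerA A \<and> g \<noteq> 0 \<and>
     (\<forall>h \<in> kerA A. h \<noteq> 0 \<longrightarrow> supp h \<subseteq> supp g \<longrightarrow> supp h = supp g)"

definition circuit :: "real^'n^'m \<Rightarrow> 'n set \<Rightarrow> bool" where
  "circuit A C \<longleftrightarrow> (\<exists>g. elementary A g \<and> supp g = C)"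

text \<open>Circuit imbalance; the ratio set always contains 1 (take i = j) when an elementary
  vector exists; by convention \<open>\<kappa>_A = 1\<close> if \<open>ker A = {0}\<close>.\<close>
definition kappa :: "real^'n^'m \<Rightarrow> real" where
  "kappa A = Sup (insert 1 {\<bar>g $ i\<bar> / \<bar>g $ j\<bar> | g i j.
       elementary A g \<and> i \<in> supp g \<and> j \<in> supp g})"

definition rk :: "real^'n^'m \<Rightarrow> 'n set \<Rightarrow> nat" where
  "rk A S = dim ((\<lambda>i. column i A) ` S)"

definition cl :: "real^'n^'m \<Rightarrow> 'n set \<Rightarrow> 'n set" where
  "cl A S = {i. rk A (insert i S) = rk A S}"

definition norm_inf_on :: "'n set \<Rightarrow> real^'n \<Rightarrow> real" where
  "norm_inf_on S x = Sup (insert 0 ((\<lambda>i. \<bar>x $ i\<bar>) ` S))"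

definition norm1_on :: "'n set \<Rightarrow> real^'n \<Rightarrow> real" where
  "norm1_on T z = (\<Sum>i\<in>T. \<bar>z $ i\<bar>)"

end

theory Submission imports Defs begin

lemma ker_sum: "A *v g = (\<Sum>j\<in>UNIV. g $ j *\<^sub>R column j A)"
  by (simp add: matrix_mult_sum scalar_mult_eq_scaleR)

lemma in_kerA: "g \<in> kerA A \<longleftrightarrow> (\<Sum>j\<in>UNIV. g $ j *\<^sub>R column j A) = 0"
  by (simp add: kerA_def ker_sum)

lemma span_coeffs:
  fixes f :: "'a \<Rightarrow> 'b::real_vector"
  assumes "finite L" "v \<in> span (f ` L)"
  shows "\<exists>c. v = (\<Sum>l\<in>L. c l *\<^sub>R f l)"
  using assms
proof (induction L arbitrary: v rule: finite_induct)
  case empty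
  then show ?case by simp
next
  case (insert l L)
  from insert.prems obtain k where k: "v - k *\<^sub>R f l \<in> span (f ` L)"
    by (auto simp: span_insert)
  from insert.IH[OF k] obtain c where c: "v - k *\<^sub>R f l = (\<Sum>l\<in>L. c l *\<^sub>R f l)" by blast
  have e: "(\<Sum>l'\<in>L. (c(l := k)) l' *\<^sub>R f l') = (\<Sum>l'\<in>L. c l' *\<^sub>R f l')"
    using insert.hyps(2) by (intro sum.cong) auto
  have "(\<Sum>l'\<in>insert l L. (c(l := k)) l' *\<^sub>R f l') = (\<Sum>l'\<in>L. c l' *\<^sub>R f l') + k *\<^sub>R f l"
    using insert.hyps e by (simp add: add.commute)
  moreover have "v = (\<Sum>l'\<in>L. c l' *\<^sub>R f l') + k *\<^sub>R f l" using c by (simp add: diff_eq_eq)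
  ultimately show ?case by metis
qed

lemma supp_finite: "finite (supp g)" by simp

lemma elementary_prop:
  assumes "elementary A g" "elementary A g'" "supp g = supp g'"
  shows "\<exists>c. g' = c *\<^sub>R g"
proof -
  have "g \<noteq> 0" using assms by (auto simp: elementary_def)
  then obtain j where j: "g $ j \<noteq> 0" by (metis vec_eq_iff zero_index)
  hence j': "g' $ j \<noteq> 0" using assms(3) by (auto simp: supp_def)
  let ?d = "g' - (g' $ j / g $ j) *\<^sub>R g"
  have dk: "?d \<in> kerA A" using assms(1,2) unfolding elementary_def kerA_def
    by (simp add: matrix_vector_mult_diff_distrib matrix_vector_mult_scaleR)
  have ds: "supp ?d \<subseteq> supp g' - {j}"
  proof
    fix i assume i: "i \<in> supp ?d"
    show "i \<in> supp g' - {j}"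
    proof (cases "g' $ i = 0")
      case True
      then have "g $ i = 0" using assms(3) unfolding supp_def by blast
      then show ?thesis using i True unfolding supp_def by simp
    next
      case False
      have "i \<noteq> j" using i j unfolding supp_def by auto
      then show ?thesis using False unfolding supp_def by simp
    qed
  qed
  have "?d = 0"
  proof (rule ccontr)
    assume "?d \<noteq> 0"
    with assms(2) dk ds have "supp ?d = supp g'" by (auto simp: elementary_def)
    with ds j' show False by (auto simp: supp_def)
  qed
  then show ?thesis by (metis eq_iff_diff_eq_0)
qed

lemma exists_elem_through:
  assumes "v \<in> kerA A" "v $ i \<noteq> 0"
  shows "\<exists>g. elementary A g \<and> i \<in> supp g \<and> supp g \<subseteq> supp v"
  using assms
proof (induction "card (supp v)" arbitrary: v rule: less_induct)
  case less
  show ?case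
  proof (cases "elementary A v")
    case True then show ?thesis using less.prems by (auto simp: supp_def)
  next
    case False
    have "v \<noteq> 0" using less.prems(2) by auto
    then obtain h where h: "h \<in> kerA A" "h \<noteq> 0" "supp h \<subseteq> supp v" "supp h \<noteq> supp v"
      using False less.prems(1) unfolding elementary_def by blast
    have hs: "supp h \<subset> supp v" using h by auto
    have cardh: "card (supp h) < card (supp v)" by (rule psubset_card_mono[OF supp_finite hs])
    show ?thesis
    proof (cases "h $ i = 0")
      case False
      from less.hyps[OF cardh h(1) False] obtain g where
        "elementary A g \<and> i \<in> supp g \<and> supp g \<subseteq> supp h" by blast
      thus ?thesis using h(3) by blast
    next
      case True
      obtain j where j: "h $ j \<noteq> 0" using h(2) by (metis vec_eq_iff zero_index)
      let ?v = "v - (v $ j / h $ j) *\<^sub>R h"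
      have vk: "?v \<in> kerA A" using less.prems(1) h(1) unfolding kerA_def
        by (simp add: matrix_vector_mult_diff_distrib matrix_vector_mult_scaleR)
      have vi: "?v $ i \<noteq> 0" using True less.prems(2) by simp
      have vs: "supp ?v \<subseteq> supp v - {j}"
      proof
        fix i' assume i': "i' \<in> supp ?v"
        show "i' \<in> supp v - {j}"
        proof (cases "v $ i' = 0")
          case True
          then have "h $ i' = 0" using h(3) unfolding supp_def by blast
          then show ?thesis using i' True unfolding supp_def by simp
        next
          case False
          have "i' \<noteq> j" using i' j unfolding supp_def by auto
          then show ?thesis using False unfolding supp_def by simp
        qed
      qed
      have jv: "j \<in> supp v" using j h(3) unfolding supp_def by blast
      have "card (supp ?v) \<le> card (supp v - {j})" by (rule card_mono[OF _ vs]) simp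
      also have "\<dots> < card (supp v)" by (rule card_Diff1_less[OF supp_finite jv])
      finally have cv: "card (supp ?v) < card (supp v)" .
      from less.hyps[OF cv vk vi] obtain g where
        "elementary A g \<and> i \<in> supp g \<and> supp g \<subseteq> supp ?v" by blast
      thus ?thesis using vs by blast
    qed
  qed
qed

lemma ratio_bdd:
  "bdd_above {\<bar>g $ i\<bar> / \<bar>g $ j\<bar> | g i j. elementary A g \<and> i \<in> supp g \<and> j \<in> supp g}"
proof -
  define rep where "rep C = (SOME g. elementary A g \<and> supp g = C)" for C
  have sub: "{\<bar>g $ i\<bar> / \<bar>g $ j\<bar> | g i j. elementary A g \<and> i \<in> supp g \<and> j \<in> supp g}
     \<subseteq> (\<lambda>(C,i,j). \<bar>rep C $ i\<bar> / \<bar>rep C $ j\<bar>) ` UNIV"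
  proof
    fix r assume "r \<in> {\<bar>g $ i\<bar> / \<bar>g $ j\<bar> | g i j. elementary A g \<and> i \<in> supp g \<and> j \<in> supp g}"
    then obtain g i j where r: "r = \<bar>g $ i\<bar> / \<bar>g $ j\<bar>" and g: "elementary A g" by blast
    have "\<exists>g'. elementary A g' \<and> supp g' = supp g" using g by blast
    hence rg: "elementary A (rep (supp g)) \<and> supp (rep (supp g)) = supp g"
      unfolding rep_def by (rule someI_ex)
    then obtain c where c: "g = c *\<^sub>R rep (supp g)" using elementary_prop[OF _ g] by metis
    have "c \<noteq> 0" using g c by (auto simp: elementary_def)
    define R where "R = rep (supp g)"
    have cR: "g = c *\<^sub>R R" unfolding R_def by (rule c)
    have gi: "g $ i = c * R $ i" "g $ j = c * R $ j" using cR by simp_all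
    have "r = \<bar>R $ i\<bar> / \<bar>R $ j\<bar>" using r \<open>c \<noteq> 0\<close> unfolding gi abs_mult by simp
    hence "r = \<bar>rep (supp g) $ i\<bar> / \<bar>rep (supp g) $ j\<bar>" unfolding R_def .
    thus "r \<in> (\<lambda>(C,i,j). \<bar>rep C $ i\<bar> / \<bar>rep C $ j\<bar>) ` UNIV"
      by (intro image_eqI[where x="(supp g, i, j)"]) auto
  qed
  show ?thesis
    by (rule bdd_above_mono[OF bdd_above_finite sub]) simp
qed

lemma kappa_ratio:
  assumes "elementary A g" "i \<in> supp g" "j \<in> supp g"
  shows "\<bar>g $ i\<bar> / \<bar>g $ j\<bar> \<le> kappa A"
  unfolding kappa_def
  by (rule cSup_upper) (use assms ratio_bdd in auto)

lemma kappa_ge1: "1 \<le> kappa A"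
  unfolding kappa_def
  by (rule cSup_upper) (use ratio_bdd in auto)

lemma step_eq:
  fixes q h :: "real^'n" and k t :: real
  assumes "supp h \<subseteq> supp q" "\<forall>j. sgn (q$j) * (q$j + t*h$j) \<ge> 0"
  shows "k * (\<Sum>j\<in>W. \<bar>(q + t *\<^sub>R h)$j\<bar>) - \<bar>(q + t *\<^sub>R h)$i\<bar>
     = (k * (\<Sum>j\<in>W. \<bar>q$j\<bar>) - \<bar>q$i\<bar>) + t * (k * (\<Sum>j\<in>W. sgn(q$j) * h$j) - sgn(q$i)*h$i)"
proof -
  have ab: "\<bar>q$j + t*h$j\<bar> = \<bar>q$j\<bar> + t*(sgn(q$j)*h$j)" for j
  proof (cases "q$j = 0")
    case True then have "h$j = 0" using assms(1) by (auto simp: supp_def)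
    then show ?thesis using True by simp
  next
    case False
    have nn: "sgn (q$j) * (q$j + t*h$j) \<ge> 0" using assms(2) by blast
    show ?thesis
    proof (cases "q$j > 0")
      case True
      then show ?thesis using nn by (simp add: sgn_if)
    next
      case False
      then have "q$j < 0" using \<open>q$j \<noteq> 0\<close> by simp
      then show ?thesis using nn by (simp add: sgn_if)
    qed
  qed
  have S: "(\<Sum>j\<in>W. \<bar>(q + t *\<^sub>R h)$j\<bar>) = (\<Sum>j\<in>W. \<bar>q$j\<bar>) + t * (\<Sum>j\<in>W. sgn(q$j)*h$j)"
    by (simp add: ab sum.distrib sum_distrib_left)
  have Si: "\<bar>(q + t *\<^sub>R h)$i\<bar> = \<bar>q$i\<bar> + t*(sgn(q$i)*h$i)" using ab by simp
  show ?thesis unfolding S Si by (simp add: algebra_simps)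
qed

lemma reduce:
  fixes A :: "real^'n^'m" and q h :: "real^'n" and k :: real
  assumes qk: "q \<in> kerA A" and hk: "h \<in> kerA A" and hs: "supp h \<subseteq> supp q"
    and sneg: "k * (\<Sum>j\<in>W. sgn(q$j) * h$j) - sgn(q$i)*h$i \<le> 0"
    and ex: "\<exists>j. q$j * h$j < 0"
    and Fq: "k * (\<Sum>j\<in>W. \<bar>q$j\<bar>) - \<bar>q$i\<bar> < 0"
  shows "\<exists>q'. q' \<in> kerA A \<and> supp q' \<subset> supp q \<and> k * (\<Sum>j\<in>W. \<bar>q'$j\<bar>) - \<bar>q'$i\<bar> < 0"
proof -
  define J where "J = {j. q$j * h$j < 0}"
  have Jne: "J \<noteq> {}" using ex unfolding J_def by blast
  have Jf: "finite J" by simp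
  define t where "t = Min ((\<lambda>j. - q$j / h$j) ` J)"
  have "t \<in> (\<lambda>j. - q$j / h$j) ` J" unfolding t_def by (rule Min_in) (use Jf Jne in auto)
  then obtain j0 where j0: "j0 \<in> J" "t = - q$j0 / h$j0" by blast
  have tle: "t \<le> - q$j / h$j" if "j \<in> J" for j
    unfolding t_def using that Jf by (intro Min_le) auto
  have pos: "- q$j / h$j > 0" if "j \<in> J" for j
  proof -
    have "q$j * h$j < 0" using that unfolding J_def by simp
    then show ?thesis by (auto simp: mult_less_0_iff divide_pos_neg divide_neg_pos)
  qed
  have tpos: "t > 0" using pos[OF j0(1)] j0(2) by simp
  have nf: "\<forall>j. sgn (q$j) * (q$j + t*h$j) \<ge> 0"
  proof
    fix j
    show "sgn (q$j) * (q$j + t*h$j) \<ge> 0"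
    proof (cases "j \<in> J")
      case True
      have qh: "q$j * h$j < 0" using True unfolding J_def by simp
      have tl: "t \<le> - q$j / h$j" using tle[OF True] .
      show ?thesis
      proof (cases "q$j > 0")
        case True
        then have "h$j < 0" using qh by (auto simp: mult_less_0_iff)
        then have a: "(- q$j / h$j) * h$j \<le> t * h$j" using tl by (intro mult_right_mono_neg) auto
        have b: "(- q$j / h$j) * h$j = - q$j" using \<open>h$j < 0\<close> by simp
        from a b have "t * h$j \<ge> - q$j" by linarith
        then show ?thesis using True by (simp add: sgn_if)
      next
        case False
        then have "q$j < 0" "h$j > 0" using qh by (auto simp: mult_less_0_iff)
        then have a: "t * h$j \<le> (- q$j / h$j) * h$j" using tl by (intro mult_right_mono) auto
        have b: "(- q$j / h$j) * h$j = - q$j" using \<open>h$j > 0\<close> by simp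
        from a b have "t * h$j \<le> - q$j" by linarith
        then show ?thesis using \<open>q$j < 0\<close> by (simp add: sgn_if)
      qed
    next
      case False
      then have qh: "q$j * h$j \<ge> 0" unfolding J_def by simp
      show ?thesis
      proof (cases "q$j > 0")
        case True
        then have "h$j \<ge> 0" using qh by (simp add: zero_le_mult_iff)
        then show ?thesis using True tpos by (simp add: sgn_if)
      next
        case False
        show ?thesis
        proof (cases "q$j = 0")
          case True then show ?thesis by simp
        next
          case False
          then have qn: "q$j < 0" using \<open>\<not> q$j > 0\<close> by simp
          then have "h$j \<le> 0" using qh by (simp add: zero_le_mult_iff)
          then have "t * h$j \<le> 0" using tpos by (simp add: mult_nonneg_nonpos)
          then show ?thesis using qn by (simp add: sgn_if)
        qed
      qed
    qed
  qed
  define q' where "q' = q + t *\<^sub>R h"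
  have eq: "k * (\<Sum>j\<in>W. \<bar>q'$j\<bar>) - \<bar>q'$i\<bar>
     = (k * (\<Sum>j\<in>W. \<bar>q$j\<bar>) - \<bar>q$i\<bar>) + t * (k * (\<Sum>j\<in>W. sgn(q$j) * h$j) - sgn(q$i)*h$i)"
    unfolding q'_def by (rule step_eq[OF hs nf])
  have "t * (k * (\<Sum>j\<in>W. sgn(q$j) * h$j) - sgn(q$i)*h$i) \<le> 0"
    using tpos sneg by (simp add: mult_nonneg_nonpos)
  then have F': "k * (\<Sum>j\<in>W. \<bar>q'$j\<bar>) - \<bar>q'$i\<bar> < 0" using eq Fq by linarith
  have q'k: "q' \<in> kerA A" using qk hk unfolding kerA_def q'_def
    by (simp add: matrix_vector_right_distrib matrix_vector_mult_scaleR)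
  have hj0: "h$j0 \<noteq> 0" using j0(1) unfolding J_def by auto
  have qj0: "j0 \<in> supp q" using j0(1) unfolding J_def supp_def by auto
  have "q'$j0 = 0" unfolding q'_def using j0(2) hj0 by simp
  moreover have "supp q' \<subseteq> supp q"
  proof
    fix j assume "j \<in> supp q'"
    moreover have "j \<notin> supp q \<Longrightarrow> h$j = 0" using hs unfolding supp_def by blast
    ultimately show "j \<in> supp q" unfolding supp_def q'_def by auto
  qed
  ultimately have "supp q' \<subset> supp q" using qj0 unfolding supp_def by blast
  then show ?thesis using q'k F' by blast
qed

lemma ker_neg: "h \<in> kerA A \<Longrightarrow> - h \<in> kerA A"
  unfolding kerA_def using matrix_vector_mult_scaleR[of A "-1" h] by simp

lemma main_bound:
  fixes A :: "real^'n^'m"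
  assumes H: "\<And>g. elementary A g \<Longrightarrow> i \<in> supp g \<Longrightarrow> supp g \<inter> W \<noteq> {}"
  shows "q \<in> kerA A \<Longrightarrow> \<bar>q$i\<bar> \<le> kappa A * (\<Sum>j\<in>W. \<bar>q$j\<bar>)"
proof (induction "card (supp q)" arbitrary: q rule: less_induct)
  case less
  let ?k = "kappa A"
  have k1: "1 \<le> ?k" by (rule kappa_ge1)
  have IH: "\<And>q'. q' \<in> kerA A \<Longrightarrow> supp q' \<subset> supp q \<Longrightarrow> \<bar>q'$i\<bar> \<le> ?k * (\<Sum>j\<in>W. \<bar>q'$j\<bar>)"
    using less.hyps psubset_card_mono[OF supp_finite] by blast
  show ?case
  proof (cases "q$i = 0")
    case True then show ?thesis using k1 by (simp add: sum_nonneg)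
  next
    case qi: False
    show ?thesis
    proof (cases "elementary A q")
      case True
      have iq: "i \<in> supp q" using qi by (simp add: supp_def)
      then obtain j where j: "j \<in> supp q" "j \<in> W" using H[OF True] by blast
      have r: "\<bar>q$i\<bar> / \<bar>q$j\<bar> \<le> ?k" by (rule kappa_ratio[OF True iq j(1)])
      have qj: "\<bar>q$j\<bar> > 0" using j(1) by (simp add: supp_def)
      have "\<bar>q$i\<bar> \<le> ?k * \<bar>q$j\<bar>" using r qj by (simp add: pos_divide_le_eq)
      also have "\<dots> \<le> ?k * (\<Sum>j\<in>W. \<bar>q$j\<bar>)" using k1 j(2) by (intro mult_left_mono member_le_sum) auto
      finally show ?thesis .
    next
      case False
      show ?thesis
      proof (rule ccontr)
        assume "\<not> ?thesis"
        hence Fq: "?k * (\<Sum>j\<in>W. \<bar>q$j\<bar>) - \<bar>q$i\<bar> < 0" by simp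
        have "q \<noteq> 0" using qi by auto
        then obtain h where h: "h \<in> kerA A" "h \<noteq> 0" "supp h \<subseteq> supp q" "supp h \<noteq> supp q"
          using False less.prems unfolding elementary_def by blast
        define s where "s v = ?k * (\<Sum>j\<in>W. sgn(q$j) * v$j) - sgn(q$i) * v$i" for v :: "real^'n"
        have sneg: "s (-v) = - s v" for v unfolding s_def by (simp add: sum_negf)
        define h' where "h' = (if s h \<le> 0 then h else -h)"
        have h'k: "h' \<in> kerA A" using h(1) ker_neg unfolding h'_def by auto
        have h's: "supp h' = supp h" unfolding h'_def supp_def by auto
        have h'ne: "h' \<noteq> 0" using h(2) unfolding h'_def by auto
        have sh': "s h' \<le> 0" unfolding h'_def using sneg[of h] by auto
        have red: False if g: "g \<in> kerA A" "supp g \<subseteq> supp q" "s g \<le> 0" "\<exists>j. q$j * g$j < 0" for g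
        proof -
          obtain q' where q': "q' \<in> kerA A" "supp q' \<subset> supp q" "?k * (\<Sum>j\<in>W. \<bar>q'$j\<bar>) - \<bar>q'$i\<bar> < 0"
            using reduce[OF less.prems g(1) g(2) _ g(4) Fq] g(3) unfolding s_def by blast
          show False using IH[OF q'(1,2)] q'(3) by linarith
        qed
        show False
        proof (cases "\<exists>j. q$j * h'$j < 0")
          case True then show False using red[OF h'k _ sh'] h's h(3) by blast
        next
          case False
          hence nn: "q$j * h'$j \<ge> 0" for j by (simp add: not_less)
          have sg: "sgn(q$j) * h'$j = \<bar>h'$j\<bar>" for j
          proof (cases "q$j = 0")
            case True then have "h'$j = 0" using h's h(3) unfolding supp_def by blast
            then show ?thesis by simp
          next
            case False
            show ?thesis
            proof (cases "q$j > 0")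
              case True then have "h'$j \<ge> 0" using nn[of j] by (simp add: zero_le_mult_iff)
              then show ?thesis using True by simp
            next
              case F2: False
              then have "q$j < 0" using False by simp
              then have "h'$j \<le> 0" using nn[of j] by (simp add: zero_le_mult_iff)
              then show ?thesis using \<open>q$j < 0\<close> by simp
            qed
          qed
          have "s h' = ?k * (\<Sum>j\<in>W. \<bar>h'$j\<bar>) - \<bar>h'$i\<bar>" unfolding s_def sg by simp
          moreover have "\<bar>h'$i\<bar> \<le> ?k * (\<Sum>j\<in>W. \<bar>h'$j\<bar>)" using IH[OF h'k] h's h(3) h(4) by auto
          ultimately have "s h' \<ge> 0" by simp
          hence s0: "s (-h') \<le> 0" using sneg by simp
          obtain j where hj: "h'$j \<noteq> 0" using h'ne by (metis vec_eq_iff zero_index)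
          then have "q$j \<noteq> 0" using h's h(3) unfolding supp_def by blast
          then have "q$j * h'$j > 0" using nn[of j] hj by (simp add: order_le_less)
          then have "q$j * (-h')$j < 0" by simp
          moreover have "supp (-h') \<subseteq> supp q" using h's h(3) unfolding supp_def by auto
          ultimately show False using red[OF ker_neg[OF h'k] _ s0] by blast
        qed
      qed
    qed
  qed
qed

lemma cl_span:
  fixes A :: "real^'n^'m"
  assumes "j \<in> cl A L"
  shows "column j A \<in> span ((\<lambda>i. column i A) ` L)"
proof (rule ccontr)
  assume n: "column j A \<notin> span ((\<lambda>i. column i A) ` L)"
  have "rk A (insert j L) = dim (insert (column j A) ((\<lambda>i. column i A) ` L))"
    unfolding rk_def by simp
  also have "\<dots> = rk A L + 1" using n unfolding rk_def by (simp add: eucl.dim_insert)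
  finally show False using assms unfolding cl_def by simp
qed

lemma notspan:
  fixes A :: "real^'n^'m"
  assumes nc: "\<not> (\<exists>C. circuit A C \<and> C \<subseteq> supp x \<and> C \<inter> S \<noteq> {})"
    and iS: "i \<in> S" and xi: "x $ i \<noteq> 0"
  shows "column i A \<notin> span ((\<lambda>l. column l A) ` (supp x - {i}))"
proof
  assume "column i A \<in> span ((\<lambda>l. column l A) ` (supp x - {i}))"
  then obtain c where c: "column i A = (\<Sum>l\<in>supp x - {i}. c l *\<^sub>R column l A)"
    using span_coeffs[of "supp x - {i}"] by auto
  define v where "v = (\<chi> l. if l = i then -1 else if l \<in> supp x then c l else 0)"
  have ix: "i \<in> supp x" using xi by (simp add: supp_def)
  have "(\<Sum>j\<in>UNIV. v $ j *\<^sub>R column j A) = (\<Sum>j\<in>supp x. v $ j *\<^sub>R column j A)"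
    by (rule sum.mono_neutral_right) (auto simp: v_def ix)
  also have "\<dots> = v $ i *\<^sub>R column i A + (\<Sum>j\<in>supp x - {i}. v $ j *\<^sub>R column j A)"
    by (rule sum.remove[OF supp_finite ix])
  also have "(\<Sum>j\<in>supp x - {i}. v $ j *\<^sub>R column j A) = (\<Sum>j\<in>supp x - {i}. c j *\<^sub>R column j A)"
    by (rule sum.cong) (auto simp: v_def)
  finally have "(\<Sum>j\<in>UNIV. v $ j *\<^sub>R column j A) = 0" using c by (simp add: v_def)
  hence vk: "v \<in> kerA A" by (simp add: in_kerA)
  have vi: "v $ i \<noteq> 0" by (simp add: v_def)
  obtain g where g: "elementary A g" "i \<in> supp g" "supp g \<subseteq> supp v"
    using exists_elem_through[OF vk vi] by blast
  have "supp v \<subseteq> supp x" using ix by (auto simp: supp_def v_def split: if_splits)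
  hence "circuit A (supp g) \<and> supp g \<subseteq> supp x \<and> supp g \<inter> S \<noteq> {}"
    using g iS unfolding circuit_def by blast
  thus False using nc by blast
qed

lemma W_meet:
  fixes A :: "real^'n^'m"
  assumes nc: "\<not> (\<exists>C. circuit A C \<and> C \<subseteq> supp x \<and> C \<inter> S \<noteq> {})"
    and L: "L \<subseteq> supp x" and SL: "S \<subseteq> UNIV - L"
    and iS: "i \<in> S" and xi: "x $ i \<noteq> 0"
  shows "i \<notin> cl A L"
    and "\<And>g. elementary A g \<Longrightarrow> i \<in> supp g \<Longrightarrow> supp g \<inter> (UNIV - cl A L - supp x) \<noteq> {}"
proof -
  let ?V = "span ((\<lambda>l. column l A) ` (supp x - {i}))"
  have ns: "column i A \<notin> ?V" by (rule notspan[OF nc iS xi])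
  have LV: "span ((\<lambda>l. column l A) ` L) \<subseteq> ?V"
    using L SL iS by (intro span_mono) auto
  show "i \<notin> cl A L" using cl_span[of i A L] LV ns by blast
  fix g assume g: "elementary A g" "i \<in> supp g"
  show "supp g \<inter> (UNIV - cl A L - supp x) \<noteq> {}"
  proof
    assume e: "supp g \<inter> (UNIV - cl A L - supp x) = {}"
    have colV: "column j A \<in> ?V" if "j \<in> supp g - {i}" for j
    proof (cases "j \<in> supp x")
      case True
      then show ?thesis using that by (intro span_base) auto
    next
      case False
      then have "j \<in> cl A L" using e that by blast
      then show ?thesis using cl_span LV by blast
    qed
    have gi: "g $ i \<noteq> 0" using g(2) by (simp add: supp_def)
    have "0 = (\<Sum>j\<in>UNIV. g $ j *\<^sub>R column j A)" using g(1) by (simp add: elementary_def in_kerA)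
    also have "\<dots> = (\<Sum>j\<in>supp g. g $ j *\<^sub>R column j A)"
      by (rule sum.mono_neutral_right) (auto simp: supp_def)
    also have "\<dots> = g $ i *\<^sub>R column i A + (\<Sum>j\<in>supp g - {i}. g $ j *\<^sub>R column j A)"
      by (rule sum.remove[OF supp_finite g(2)])
    finally have eq: "g $ i *\<^sub>R column i A = - (\<Sum>j\<in>supp g - {i}. g $ j *\<^sub>R column j A)"
      by (simp add: eq_neg_iff_add_eq_0)
    have "(\<Sum>j\<in>supp g - {i}. g $ j *\<^sub>R column j A) \<in> ?V"
      using colV by (intro span_sum span_scale) auto
    hence "(- inverse (g $ i)) *\<^sub>R (\<Sum>j\<in>supp g - {i}. g $ j *\<^sub>R column j A) \<in> ?V"
      by (rule span_scale)
    moreover have "(- inverse (g $ i)) *\<^sub>R (\<Sum>j\<in>supp g - {i}. g $ j *\<^sub>R column j A) = column i A"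
    proof -
      have "column i A = inverse (g $ i) *\<^sub>R (g $ i *\<^sub>R column i A)" using gi by simp
      also have "\<dots> = (- inverse (g $ i)) *\<^sub>R (\<Sum>j\<in>supp g - {i}. g $ j *\<^sub>R column j A)"
        unfolding eq by simp
      finally show ?thesis by simp
    qed
    ultimately show False using ns by simp
  qed
qed

theorem lemma2p7:
  fixes A :: "real^'n^'m" and x :: "real^'n" and L S :: "'n set"
  assumes "L \<subseteq> supp x"
    and "S \<subseteq> UNIV - L"
    and "\<not> (\<exists>C. circuit A C \<and> C \<subseteq> supp x \<and> C \<inter> S \<noteq> {})"
  shows "norm_inf_on S x \<le>
     kappa A * Inf ((\<lambda>z. norm1_on (UNIV - cl A L) z) ` {h + x | h. h \<in> kerA A})"
proof -
  let ?k = "kappa A"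
  let ?T = "UNIV - cl A L"
  let ?Y = "(\<lambda>z. norm1_on ?T z) ` {h + x | h. h \<in> kerA A}"
  have k1: "1 \<le> ?k" by (rule kappa_ge1)
  have pt: "\<bar>x $ i\<bar> \<le> ?k * norm1_on ?T (h + x)" if iS: "i \<in> S" and hk: "h \<in> kerA A" for i h
  proof (cases "x $ i = 0")
    case True
    then show ?thesis using k1 by (simp add: norm1_on_def sum_nonneg)
  next
    case xi: False
    define W where "W = UNIV - cl A L - supp x"
    have icl: "i \<notin> cl A L" by (rule W_meet(1)[OF assms(3,1,2) iS xi])
    have H: "supp g \<inter> W \<noteq> {}" if "elementary A g" "i \<in> supp g" for g
      unfolding W_def by (rule W_meet(2)[OF assms(3,1,2) iS xi that])
    have mb: "\<bar>(-h)$i\<bar> \<le> ?k * (\<Sum>j\<in>W. \<bar>(-h)$j\<bar>)"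
      by (rule main_bound[OF H ker_neg[OF hk]])
    have Wz: "(\<Sum>j\<in>W. \<bar>(-h)$j\<bar>) = (\<Sum>j\<in>W. \<bar>(h + x)$j\<bar>)"
      by (rule sum.cong) (auto simp: W_def supp_def)
    have iW: "i \<notin> W" using xi by (simp add: W_def supp_def)
    have sub: "insert i W \<subseteq> ?T" using icl by (auto simp: W_def)
    have "\<bar>x $ i\<bar> \<le> \<bar>(h + x) $ i\<bar> + \<bar>(-h)$i\<bar>" by simp
    also have "\<dots> \<le> ?k * \<bar>(h + x) $ i\<bar> + ?k * (\<Sum>j\<in>W. \<bar>(h + x)$j\<bar>)"
      using mb Wz k1 by (intro add_mono) (auto intro: mult_right_mono[of 1 ?k, simplified])
    also have "\<dots> = ?k * (\<Sum>j\<in>insert i W. \<bar>(h + x)$j\<bar>)"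
      using iW by (simp add: distrib_left)
    also have "\<dots> \<le> ?k * norm1_on ?T (h + x)"
      unfolding norm1_on_def using k1 sub by (intro mult_left_mono sum_mono2) auto
    finally show ?thesis .
  qed
  have "0 \<in> kerA A" by (simp add: kerA_def)
  hence Yne: "?Y \<noteq> {}" by blast
  have lb: "norm_inf_on S x / ?k \<le> y" if "y \<in> ?Y" for y
  proof -
    obtain h where h: "h \<in> kerA A" "y = norm1_on ?T (h + x)" using \<open>y \<in> ?Y\<close> by blast
    have y0: "0 \<le> y" unfolding h(2) norm1_on_def by (simp add: sum_nonneg)
    have "norm_inf_on S x \<le> ?k * y"
      unfolding norm_inf_on_def
      by (rule cSup_least) (use pt h y0 k1 in auto)
    then show ?thesis using k1 by (simp add: pos_divide_le_eq mult.commute)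
  qed
  have "norm_inf_on S x / ?k \<le> Inf ?Y" by (rule cInf_greatest[OF Yne lb])
  then show ?thesis using k1 by (simp add: pos_divide_le_eq mult.commute)
qed

end
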